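(* Let $(X,\mathcal{A})$ be a measurable space, $f,g\in\mathcal{F}_{[0,1]}^{(X,\mathcal{A})}$ comonotone, and $\star:[0,1]^2\to[0,1]$ continuous, non-decreasing in both arguments and bounded from below by the maximum ($a\star b\ge\max(a,b)$). Then for every monotone measure $m$ on $(X,\mathcal{A})$ with $m(X)=1$ and all $\alpha,\beta,\gamma,\lambda,\upsilon,\tau\in(0,\infty)$ with $1\le\alpha\lambda<\infty$, $0<\beta\upsilon\le1$, $0<\gamma\tau\le1$, $\lambda\ge\tau$ and $\lambda\ge\upsilon$, \[ \big[\mathbf{Su}(m,(f\star g)^{\alpha})\big]^{\lambda}\ \le\ \big[\mathbf{Su}(m,f^{\beta})\big]^{\upsilon}\star\big[\mathbf{Su}(m,g^{\gamma})\big]^{\tau}. \]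
   Context: A monotone measure on $(X,\mathcal{A})$ is $m:\mathcal{A}\to[0,\infty]$ with $m(\emptyset)=0$, $m(X)>0$, $m(A)\le m(B)$ for $A\subseteq B$. $\mathcal{F}_{[0,1]}^{(X,\mathcal{A})}$ is the set of $\mathcal{A}$-measurable $f:X\to[0,1]$. The Sugeno integral is $\mathbf{Su}(m,f)=\sup\{\min(t,m(\{f\ge t\})) : t\in(0,\infty]\}$. $f,g$ are comonotone if $(f(x)-f(y))(g(x)-g(y))\ge0$ for all $x,y$. Operations on functions are pointwise. *)

theory Defs
  imports "HOL-Analysis.Analysis"
begin

definition monotone_measure :: "'a measure \<Rightarrow> ('a set \<Rightarrow> ennreal) \<Rightarrow> bool" where
  "monotone_measure M m \<longleftrightarrow>
     m {} = 0 \<and> m (space M) > 0 \<and>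
     (\<forall>A\<in>sets M. \<forall>B\<in>sets M. A \<subseteq> B \<longrightarrow> m A \<le> m B)"

definition F01 :: "'a measure \<Rightarrow> ('a \<Rightarrow> real) set" where
  "F01 M = {f. f \<in> borel_measurable M \<and> (\<forall>x\<in>space M. 0 \<le> f x \<and> f x \<le> 1)}"

definition sugeno :: "'a measure \<Rightarrow> ('a set \<Rightarrow> ennreal) \<Rightarrow> ('a \<Rightarrow> real) \<Rightarrow> ennreal" where
  "sugeno M m f = (SUP t\<in>{0<..}. min t (m {x\<in>space M. t \<le> ennreal (f x)}))"

definition comonotone :: "'a measure \<Rightarrow> ('a \<Rightarrow> real) \<Rightarrow> ('a \<Rightarrow> real) \<Rightarrow> bool" where
  "comonotone M f g \<longleftrightarrow> (\<forall>x\<in>space M. \<forall>y\<in>space M. (f x - f y) * (g x - g y) \<ge> 0)"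

end

theory Submission
  imports Defs
begin

lemma sugeno_le1:
  assumes "\<forall>x\<in>space M. h x \<le> 1" "m {} = 0"
  shows "sugeno M m h \<le> 1"
  unfolding sugeno_def
proof (rule SUP_least)
  fix t :: ennreal assume "t \<in> {0<..}"
  show "min t (m {x \<in> space M. t \<le> ennreal (h x)}) \<le> 1"
  proof (cases "t \<le> 1")
    case True then show ?thesis by (simp add: min.coboundedI1)
  next
    case False
    have E: "{x \<in> space M. t \<le> ennreal (h x)} = {}"
    proof safe
      fix x assume x: "x \<in> space M" "t \<le> ennreal (h x)"
      have "ennreal (h x) \<le> 1" using assms(1) x(1) by (simp add: ennreal_le_1)
      then show "x \<in> {}" using x False by (meson order_trans)
    qed
    show ?thesis unfolding E using assms(2) by simp
  qed
qed

lemma sugeno_above: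
  assumes "sugeno M m h < ennreal s" "s > 0"
  shows "m {x\<in>space M. ennreal s \<le> ennreal (h x)} \<le> sugeno M m h"
proof -
  have "min (ennreal s) (m {x\<in>space M. ennreal s \<le> ennreal (h x)}) \<le> sugeno M m h"
    unfolding sugeno_def by (rule SUP_upper) (simp add: assms(2))
  then show ?thesis using assms(1) by (auto simp: min_le_iff_disj)
qed

lemma powr_le_cancel_aux:
  fixes p y b :: real
  assumes "0 < b" "0 \<le> y" "0 \<le> p"
  shows "p powr b \<le> y powr b \<longleftrightarrow> p \<le> y"
  using assms by (meson not_le powr_less_mono2 powr_mono2 less_imp_le)

theorem corollary4p5:
  fixes M :: "'a measure" and f g :: "'a \<Rightarrow> real" and star :: "real \<Rightarrow> real \<Rightarrow> real"
  assumes f: "f \<in> F01 M" and g: "g \<in> F01 M"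
    and com: "comonotone M f g"
    and star_cont: "continuous_on ({0..1} \<times> {0..1}) (\<lambda>(a, b). star a b)"
    and star_range: "\<And>a b. a \<in> {0..1} \<Longrightarrow> b \<in> {0..1} \<Longrightarrow> star a b \<in> {0..1}"
    and star_mono: "\<And>a a' b b'. a \<in> {0..1} \<Longrightarrow> a' \<in> {0..1} \<Longrightarrow> b \<in> {0..1} \<Longrightarrow> b' \<in> {0..1}
                     \<Longrightarrow> a \<le> a' \<Longrightarrow> b \<le> b' \<Longrightarrow> star a b \<le> star a' b'"
    and star_max: "\<And>a b. a \<in> {0..1} \<Longrightarrow> b \<in> {0..1} \<Longrightarrow> max a b \<le> star a b"
  shows "\<forall>m. monotone_measure M m \<and> m (space M) = 1 \<longrightarrow>
    (\<forall>\<alpha> \<beta> \<gamma> lam \<upsilon> \<tau> :: real.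
       \<alpha> > 0 \<and> \<beta> > 0 \<and> \<gamma> > 0 \<and> lam > 0 \<and> \<upsilon> > 0 \<and> \<tau> > 0 \<and>
       1 \<le> \<alpha> * lam \<and> \<beta> * \<upsilon> \<le> 1 \<and> \<gamma> * \<tau> \<le> 1 \<and> \<tau> \<le> lam \<and> \<upsilon> \<le> lam \<longrightarrow>
       enn2real (sugeno M m (\<lambda>x. star (f x) (g x) powr \<alpha>)) powr lam
         \<le> star (enn2real (sugeno M m (\<lambda>x. f x powr \<beta>)) powr \<upsilon>)
                (enn2real (sugeno M m (\<lambda>x. g x powr \<gamma>)) powr \<tau>))"
proof (intro allI impI)
  fix m and \<alpha> \<beta> \<gamma> lam \<upsilon> \<tau> :: real
  assume mm: "monotone_measure M m \<and> m (space M) = 1"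
  assume par: "\<alpha> > 0 \<and> \<beta> > 0 \<and> \<gamma> > 0 \<and> lam > 0 \<and> \<upsilon> > 0 \<and> \<tau> > 0 \<and>
       1 \<le> \<alpha> * lam \<and> \<beta> * \<upsilon> \<le> 1 \<and> \<gamma> * \<tau> \<le> 1 \<and> \<tau> \<le> lam \<and> \<upsilon> \<le> lam"
  have m0: "m {} = 0" and mmono: "\<And>A B. A \<in> sets M \<Longrightarrow> B \<in> sets M \<Longrightarrow> A \<subseteq> B \<Longrightarrow> m A \<le> m B"
    using mm unfolding monotone_measure_def by auto
  have fr: "\<And>x. x \<in> space M \<Longrightarrow> 0 \<le> f x \<and> f x \<le> 1" and fm: "f \<in> borel_measurable M"
    using f unfolding F01_def by auto
  have gr: "\<And>x. x \<in> space M \<Longrightarrow> 0 \<le> g x \<and> g x \<le> 1" and gm: "g \<in> borel_measurable M"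
    using g unfolding F01_def by auto
  define h where "h = (\<lambda>x. star (f x) (g x) powr \<alpha>)"
  have hr: "\<And>x. x \<in> space M \<Longrightarrow> 0 \<le> h x \<and> h x \<le> 1"
  proof -
    fix x assume "x \<in> space M"
    then have "star (f x) (g x) \<in> {0..1}" using fr gr star_range by auto
    then show "0 \<le> h x \<and> h x \<le> 1" unfolding h_def using par by (simp add: powr_le1)
  qed
  have fbr: "\<And>x. x \<in> space M \<Longrightarrow> 0 \<le> f x powr \<beta> \<and> f x powr \<beta> \<le> 1"
    using fr par by (simp add: powr_le1)
  have gbr: "\<And>x. x \<in> space M \<Longrightarrow> 0 \<le> g x powr \<gamma> \<and> g x powr \<gamma> \<le> 1"
    using gr par by (simp add: powr_le1)
  define a where "a = enn2real (sugeno M m (\<lambda>x. f x powr \<beta>))"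
  define b where "b = enn2real (sugeno M m (\<lambda>x. g x powr \<gamma>))"
  define L where "L = enn2real (sugeno M m h)"
  have Sa1: "sugeno M m (\<lambda>x. f x powr \<beta>) \<le> 1" using fbr m0 by (intro sugeno_le1) auto
  have Sb1: "sugeno M m (\<lambda>x. g x powr \<gamma>) \<le> 1" using gbr m0 by (intro sugeno_le1) auto
  have SL1: "sugeno M m h \<le> 1" using hr m0 by (intro sugeno_le1) auto
  have Sa: "sugeno M m (\<lambda>x. f x powr \<beta>) = ennreal a"
    unfolding a_def using Sa1 by (simp add: order_le_less_trans)
  have Sb: "sugeno M m (\<lambda>x. g x powr \<gamma>) = ennreal b"
    unfolding b_def using Sb1 by (simp add: order_le_less_trans)
  have SL: "sugeno M m h = ennreal L"
    unfolding L_def using SL1 by (simp add: order_le_less_trans)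
  have a01: "0 \<le> a \<and> a \<le> 1" unfolding a_def using Sa1 enn2real_leI by auto
  have b01: "0 \<le> b \<and> b \<le> 1" unfolding b_def using Sb1 enn2real_leI by auto
  have L01: "0 \<le> L \<and> L \<le> 1" unfolding L_def using SL1 enn2real_leI by auto
  define c where "c = star (a powr \<upsilon>) (b powr \<tau>)"
  have au: "a powr \<upsilon> \<in> {0..1}" using a01 par by (simp add: powr_le1)
  have bt: "b powr \<tau> \<in> {0..1}" using b01 par by (simp add: powr_le1)
  have c01: "c \<in> {0..1}" unfolding c_def using au bt star_range by auto
  have cmax: "a powr \<upsilon> \<le> c" "b powr \<tau> \<le> c" unfolding c_def using star_max[OF au bt] by auto
  show "enn2real (sugeno M m (\<lambda>x. star (f x) (g x) powr \<alpha>)) powr lam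
         \<le> star (enn2real (sugeno M m (\<lambda>x. f x powr \<beta>)) powr \<upsilon>)
                (enn2real (sugeno M m (\<lambda>x. g x powr \<gamma>)) powr \<tau>)"
    unfolding h_def[symmetric] L_def[symmetric] a_def[symmetric] b_def[symmetric] c_def[symmetric]
  proof (rule ccontr)
    assume "\<not> L powr lam \<le> c"
    then have cL: "c < L powr lam" by simp
    have Lp: "0 < L" proof (rule ccontr)
      assume "\<not> 0 < L" then have "L = 0" using L01 by auto
      then show False using cL par c01 by auto
    qed
    have cr: "c powr (1/lam) < L"
    proof -
      have "c powr (1/lam) < (L powr lam) powr (1/lam)"
        using cL c01 par by (intro powr_less_mono2) auto
      also have "\<dots> = L" using par Lp by (simp add: powr_powr)
      finally show ?thesis .
    qed
    define t where "t = (c powr (1/lam) + L) / 2"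
    have t1: "c powr (1/lam) < t" "t < L" using cr unfolding t_def by auto
    have tpos: "0 < t" using t1 by (smt (verit) powr_ge_zero)
    have ct: "c < t powr lam"
    proof -
      have "c = (c powr (1/lam)) powr lam" using par c01 by (simp add: powr_powr)
      also have "\<dots> < t powr lam" using t1 par by (intro powr_less_mono2) auto
      finally show ?thesis .
    qed
    have "ennreal t < sugeno M m h" using SL t1 tpos by (simp add: ennreal_less_iff)
    then obtain r' where r'pos: "r' \<in> {0<..}" and r'lt: "ennreal t < min r' (m {x\<in>space M. r' \<le> ennreal (h x)})"
      unfolding sugeno_def less_SUP_iff by blast
    have "r' \<noteq> top"
    proof
      assume "r' = top"
      then have e: "{x\<in>space M. r' \<le> ennreal (h x)} = {}" by (auto simp: top_unique)
      show False using r'lt m0 unfolding e by simp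
    qed
    then obtain r where rdef: "r' = ennreal r" and r0: "0 \<le> r" by (cases r' rule: ennreal_cases) auto
    define E where "E = {x\<in>space M. r \<le> h x}"
    have Eeq: "{x\<in>space M. r' \<le> ennreal (h x)} = E"
      unfolding E_def rdef using hr by (auto simp: ennreal_le_iff)
    have "ennreal t < ennreal r" using r'lt rdef by simp
    then have tr: "t < r" using tpos by (simp add: ennreal_less_iff)
    have tE: "ennreal t < m E" using r'lt Eeq by simp
    have r1: "r \<le> 1"
    proof (rule ccontr)
      assume "\<not> r \<le> 1"
      then have e: "E = {}" unfolding E_def using hr by force
      show False using tE m0 unfolding e by simp
    qed
    have at: "a < t"
    proof (rule ccontr)
      assume "\<not> a < t"
      then have "t powr lam \<le> a powr lam" using tpos par by (intro powr_mono2) auto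
      also have "\<dots> \<le> a powr \<upsilon>" using a01 par by (intro powr_mono') auto
      finally show False using cmax ct by simp
    qed
    have bt': "b < t"
    proof (rule ccontr)
      assume "\<not> b < t"
      then have "t powr lam \<le> b powr lam" using tpos par by (intro powr_mono2) auto
      also have "\<dots> \<le> b powr \<tau>" using b01 par by (intro powr_mono') auto
      finally show False using cmax ct by simp
    qed
    have a1: "a < 1" using at t1 L01 by simp
    have b1: "b < 1" using bt' t1 L01 by simp
    define a0 where "a0 = a powr (1/\<beta>)"
    define b0 where "b0 = b powr (1/\<gamma>)"
    have a0r: "0 \<le> a0 \<and> a0 < 1" unfolding a0_def using a01 a1 par
      by (smt (verit, best) powr_ge_zero powr_less_mono2 powr_one_eq_one divide_pos_pos)
    have b0r: "0 \<le> b0 \<and> b0 < 1" unfolding b0_def using b01 b1 par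
      by (smt (verit, best) powr_ge_zero powr_less_mono2 powr_one_eq_one divide_pos_pos)
    have a0u: "a0 \<le> a powr \<upsilon>" unfolding a0_def using a01 par
      by (intro powr_mono') (auto simp: field_simps)
    have b0t: "b0 \<le> b powr \<tau>" unfolding b0_def using b01 par
      by (intro powr_mono') (auto simp: field_simps)
    have s0c: "star a0 b0 \<le> c" unfolding c_def using a0r b0r au bt a0u b0t
      by (intro star_mono) auto
    have cra: "c < r powr (1/\<alpha>)"
    proof -
      have "t powr lam < r powr lam" using tpos tr par by (intro powr_less_mono2) auto
      moreover have "r powr lam \<le> r powr (1/\<alpha>)" using r0 r1 par
        by (intro powr_mono') (auto simp: field_simps)
      ultimately show ?thesis using ct by simp
    qed
    have inS: "(a0, b0) \<in> {0..1} \<times> {0..1}" using a0r b0r by auto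
    have epos0: "0 < r powr (1/\<alpha>) - star a0 b0" using s0c cra by simp
    obtain \<delta> where dpos: "\<delta> > 0" and dcont: "\<forall>z\<in>{0..1} \<times> {0..1}. dist z (a0, b0) < \<delta> \<longrightarrow>
        dist ((\<lambda>(a, b). star a b) z) ((\<lambda>(a, b). star a b) (a0, b0)) < r powr (1/\<alpha>) - star a0 b0"
      using star_cont[unfolded continuous_on_iff, rule_format, OF inS epos0] by blast
    define e where "e = min (\<delta>/2) (min (1 - a0) (1 - b0))"
    have epos: "0 < e" unfolding e_def using dpos a0r b0r by auto
    define p where "p = a0 + e"
    define q where "q = b0 + e"
    have pr: "a0 < p \<and> p \<le> 1" unfolding p_def e_def using epos e_def by auto
    have qr: "b0 < q \<and> q \<le> 1" unfolding q_def e_def using epos e_def by auto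
    have "\<delta>/2 < \<delta> / sqrt 2"
      using dpos sqrt2_less_2 by (intro divide_strict_left_mono) auto
    then have "e < \<delta> / sqrt 2" unfolding e_def by linarith
    then have "dist (p, q) (a0, b0) < \<delta>"
      unfolding dist_Pair_Pair p_def q_def dist_real_def using epos
      by (intro real_sqrt_sum_squares_less) auto
    then have "\<bar>star p q - star a0 b0\<bar> < r powr (1/\<alpha>) - star a0 b0"
      using dcont pr qr a0r b0r by (auto simp: dist_real_def)
    then have spq: "star p q < r powr (1/\<alpha>)" by linarith
    define F where "F = {x\<in>space M. p \<le> f x}"
    define G where "G = {x\<in>space M. q \<le> g x}"
    have EFG: "E \<subseteq> F \<union> G"
    proof
      fix x assume xE: "x \<in> E"
      then have xs: "x \<in> space M" and rh: "r \<le> h x" unfolding E_def by auto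
      show "x \<in> F \<union> G"
      proof (rule ccontr)
        assume "x \<notin> F \<union> G"
        then have "f x < p" "g x < q" using xs unfolding F_def G_def by auto
        then have "star (f x) (g x) \<le> star p q" using fr[OF xs] gr[OF xs] pr qr a0r b0r
          by (intro star_mono) auto
        then have sx: "star (f x) (g x) < r powr (1/\<alpha>)" using spq by simp
        have "h x < (r powr (1/\<alpha>)) powr \<alpha>" unfolding h_def
          using sx star_range fr[OF xs] gr[OF xs] par by (intro powr_less_mono2) auto
        also have "\<dots> = r" using par r0 by (simp add: powr_powr)
        finally show False using rh by simp
      qed
    qed
    have nest: "F \<subseteq> G \<or> G \<subseteq> F"
    proof (rule ccontr)
      assume "\<not> (F \<subseteq> G \<or> G \<subseteq> F)"
      then obtain x y where "x \<in> F" "x \<notin> G" "y \<in> G" "y \<notin> F" by blast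
      then have xy: "x \<in> space M" "y \<in> space M" "p \<le> f x" "g x < q" "q \<le> g y" "f y < p"
        unfolding F_def G_def by auto
      have "(f x - f y) * (g x - g y) < 0" using xy by (intro mult_pos_neg) auto
      then show False using com xy unfolding comonotone_def by force
    qed
    have hm: "h \<in> borel_measurable M"
    proof -
      define cl where "cl = (\<lambda>u::real. max 0 (min 1 u))"
      have clc: "continuous_on UNIV cl" unfolding cl_def by (intro continuous_intros)
      have "continuous_on UNIV (\<lambda>z::real\<times>real. (\<lambda>(a, b). star a b) (cl (fst z), cl (snd z)))"
        by (rule continuous_on_compose2[OF star_cont])
           (auto intro!: continuous_intros continuous_on_compose2[OF clc] simp: cl_def)
      then have "(\<lambda>x. (\<lambda>a b. star (cl a) (cl b)) (f x) (g x)) \<in> borel_measurable M"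
        by (intro borel_measurable_continuous_Pair[OF fm gm]) simp
      then have "(\<lambda>x. star (cl (f x)) (cl (g x)) powr \<alpha>) \<in> borel_measurable M"
        by measurable
      moreover have "\<And>x. x \<in> space M \<Longrightarrow> star (cl (f x)) (cl (g x)) powr \<alpha> = h x"
        unfolding h_def cl_def using fr gr by auto
      ultimately show ?thesis by (rule measurable_cong[THEN iffD1, rotated])
    qed
    have Em: "E \<in> sets M" unfolding E_def using hm by measurable
    have Fm: "F \<in> sets M" unfolding F_def using fm by measurable
    have Gm: "G \<in> sets M" unfolding G_def using gm by measurable
    have mF: "m F \<le> ennreal a"
    proof -
      have pb: "a < p powr \<beta>"
      proof -
        have "a = a0 powr \<beta>" unfolding a0_def using a01 par by (simp add: powr_powr)
        also have "\<dots> < p powr \<beta>" using a0r pr par by (intro powr_less_mono2) auto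
        finally show ?thesis .
      qed
      have "F = {x\<in>space M. ennreal (p powr \<beta>) \<le> ennreal (f x powr \<beta>)}"
        unfolding F_def using fr pr a0r par
        by (auto simp: ennreal_le_iff powr_le_cancel_aux)
      moreover have "m {x\<in>space M. ennreal (p powr \<beta>) \<le> ennreal (f x powr \<beta>)}
          \<le> sugeno M m (\<lambda>x. f x powr \<beta>)"
        using pb a01 by (intro sugeno_above) (auto simp: Sa ennreal_less_iff)
      ultimately show ?thesis using Sa by simp
    qed
    have mG: "m G \<le> ennreal b"
    proof -
      have pb: "b < q powr \<gamma>"
      proof -
        have "b = b0 powr \<gamma>" unfolding b0_def using b01 par by (simp add: powr_powr)
        also have "\<dots> < q powr \<gamma>" using b0r qr par by (intro powr_less_mono2) auto
        finally show ?thesis .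
      qed
      have "G = {x\<in>space M. ennreal (q powr \<gamma>) \<le> ennreal (g x powr \<gamma>)}"
        unfolding G_def using gr qr b0r par
        by (auto simp: ennreal_le_iff powr_le_cancel_aux)
      moreover have "m {x\<in>space M. ennreal (q powr \<gamma>) \<le> ennreal (g x powr \<gamma>)}
          \<le> sugeno M m (\<lambda>x. g x powr \<gamma>)"
        using pb b01 by (intro sugeno_above) (auto simp: Sb ennreal_less_iff)
      ultimately show ?thesis using Sb by simp
    qed
    have "m E \<le> ennreal a \<or> m E \<le> ennreal b"
    proof (cases "F \<subseteq> G")
      case True
      then have "E \<subseteq> G" using EFG by auto
      then show ?thesis using mmono[OF Em Gm] mG by (metis order_trans)
    next
      case False
      then have "E \<subseteq> F" using EFG nest by auto
      then show ?thesis using mmono[OF Em Fm] mF by (metis order_trans)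
    qed
    then show False using tE at bt' a01 b01 tpos
      by (metis ennreal_less_iff leD less_le_trans order_less_imp_le)
  qed
qed

end
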